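(* Let $K$ be a compact metric space and $\{\mu_j\}$ a sequence of finite positive regular Borel measures on $K$ converging weak-* in $C(K)^*$ to a finite positive Borel measure $\mu$. Suppose $\operatorname{supp}\mu_j\cap\operatorname{supp}\mu=\emptyset$ for all $j$. Then the measures $\mu_j$ converge weak-* to $\mu$ regularly.
   Context: Weak-* convergence means $\int h\,d\mu_j\to\int h\,d\mu$ for all $h\in C(K)$. The convergence is called regular if, in addition, for every $\mu$-measurable set $A\subset K_0=\operatorname{supp}\mu$ and every $\varepsilon>0$ there are an open set $O\subset K$ with $A\subset O$ and an index $j_0$ such that $\mu_j(O)<\mu(A)+\varepsilon$ for all $j\ge j_0$. *)

theory Defs
  imports "HOL-Analysis.Analysis"
begin

definition borel_on :: "'a::metric_space set \<Rightarrow> 'a measure \<Rightarrow> bool" where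
  "borel_on K M \<longleftrightarrow> sets M = sets (restrict_space borel K)"

definition regular_on :: "'a::metric_space set \<Rightarrow> 'a measure \<Rightarrow> bool" where
  "regular_on K M \<longleftrightarrow> (\<forall>B\<in>sets M.
      emeasure M B = (INF U\<in>{U. openin (top_of_set K) U \<and> B \<subseteq> U}. emeasure M U) \<and>
      emeasure M B = (SUP C\<in>{C. compact C \<and> C \<subseteq> B}. emeasure M C))"

definition supp_on :: "'a::metric_space set \<Rightarrow> 'a measure \<Rightarrow> 'a set" where
  "supp_on K M = {x\<in>K. \<forall>U. openin (top_of_set K) U \<and> x \<in> U \<longrightarrow> emeasure M U > 0}"

definition weak_star_conv :: "'a::metric_space set \<Rightarrow> (nat \<Rightarrow> 'a measure) \<Rightarrow> 'a measure \<Rightarrow> bool" where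
  "weak_star_conv K \<mu>s \<mu> \<longleftrightarrow> (\<forall>h::'a \<Rightarrow> real. continuous_on K h \<longrightarrow>
      (\<lambda>j. \<integral>x. h x \<partial>(\<mu>s j)) \<longlonglongrightarrow> (\<integral>x. h x \<partial>\<mu>))"

text \<open>Regular weak-* convergence; mu-measurable sets are those of the completion of mu.\<close>
definition regular_conv :: "'a::metric_space set \<Rightarrow> (nat \<Rightarrow> 'a measure) \<Rightarrow> 'a measure \<Rightarrow> bool" where
  "regular_conv K \<mu>s \<mu> \<longleftrightarrow> weak_star_conv K \<mu>s \<mu> \<and>
     (\<forall>A \<in> sets (completion \<mu>). A \<subseteq> supp_on K \<mu> \<longrightarrow>
       (\<forall>\<epsilon>>0. \<exists>U j0. openin (top_of_set K) U \<and> A \<subseteq> U \<and>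
          (\<forall>j\<ge>j0. measure (\<mu>s j) U < measure (completion \<mu>) A + \<epsilon>)))"

end

theory Submission
  imports Defs
begin

lemma openin_sets:
  assumes "sets M = sets (restrict_space borel K)" "openin (top_of_set K) U"
  shows "U \<in> sets M"
proof -
  obtain T where "open T" "U = K \<inter> T" using assms(2) openin_open by blast
  then show ?thesis using assms(1) by (auto simp: sets_restrict_space)
qed

lemma closedK_outer:
  fixes K :: "'a::metric_space set"
  assumes fm: "finite_measure M" and sM: "sets M = sets (restrict_space borel K)"
    and "closed K" and C: "closed C" and e: "e > 0"
  shows "\<exists>U. openin (top_of_set K) U \<and> K \<inter> C \<subseteq> U \<and> measure M (U - K \<inter> C) < e"
proof -
  interpret finite_measure M by fact
  define F where "F = K \<inter> C"
  have cF: "closed F" using assms unfolding F_def by auto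
  have FM: "F \<in> sets M" using sM C by (auto simp: sets_restrict_space F_def)
  show ?thesis
  proof (cases "F = {}")
    case True
    then show ?thesis using e unfolding F_def by (intro exI[of _ "{}"]) auto
  next
    case False
    define U where "U n = K \<inter> {x. infdist x F < 1 / real (Suc n)}" for n
    have Uo: "openin (top_of_set K) (U n)" for n
      unfolding U_def openin_open by (intro exI[of _ "{x. infdist x F < 1 / real (Suc n)}"])
        (auto intro!: open_Collect_less continuous_intros)
    have UM: "U n \<in> sets M" for n using openin_sets[OF sM Uo] .
    have FU: "F \<subseteq> U n" for n
      unfolding U_def F_def using in_closed_iff_infdist_zero[OF cF False] F_def by auto
    have dec: "decseq U"
    proof (rule decseq_SucI)
      fix n show "U (Suc n) \<subseteq> U n" unfolding U_def
        by (auto elim!: less_le_trans simp: frac_le)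
    qed
    have int: "(\<Inter>n. U n) = F"
    proof
      show "(\<Inter>n. U n) \<subseteq> F"
      proof
        fix x assume x: "x \<in> (\<Inter>n. U n)"
        have "infdist x F \<le> 0"
        proof (rule field_le_epsilon)
          fix d :: real assume "d > 0"
          then obtain n where "1 / real (Suc n) < d"
            using nat_approx_posE by blast
          moreover have "infdist x F < 1 / real (Suc n)" using x unfolding U_def by blast
          ultimately show "infdist x F \<le> 0 + d" by linarith
        qed
        then have "infdist x F = 0" using infdist_nonneg[of x F] by linarith
        then show "x \<in> F" using in_closed_iff_infdist_zero[OF cF False] by simp
      qed
    qed (use FU in auto)
    have "(\<lambda>n. measure M (U n)) \<longlonglongrightarrow> measure M (\<Inter>n. U n)"
      by (rule finite_Lim_measure_decseq) (use UM dec in auto)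
    then have "(\<lambda>n. measure M (U n)) \<longlonglongrightarrow> measure M F" using int by simp
    from order_tendstoD(2)[OF this, of "measure M F + e"] e
    obtain n where n: "measure M (U n) < measure M F + e"
      by (auto simp: eventually_sequentially)
    have "measure M (U n - F) = measure M (U n) - measure M F"
      by (rule measure_Diff) (use UM FM FU in auto)
    then show ?thesis using n Uo FU unfolding F_def[symmetric] by (intro exI[of _ "U n"]) auto
  qed
qed

lemma outer_reg:
  fixes K :: "'a::metric_space set"
  assumes fm: "finite_measure M" and sM: "sets M = sets (restrict_space borel K)"
    and cK: "closed K" and B: "B \<in> sets M"
  shows "\<forall>e>0. \<exists>U. openin (top_of_set K) U \<and> B \<subseteq> U \<and> measure M (U - B) < e"
proof -
  interpret finite_measure M by fact
  have spK: "space M = K" using sets_eq_imp_space_eq[OF sM] by (simp add: space_restrict_space)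
  define P where "P B \<longleftrightarrow> (\<forall>e>0. \<exists>U. openin (top_of_set K) U \<and> B \<subseteq> U \<and> measure M (U - B) < e)" for B
  have gen: "sets M = sigma_sets K ((\<inter>) K ` Collect closed)"
  proof -
    have "K \<in> sigma_sets UNIV (Collect closed)" using cK by auto
    then have "(\<inter>) K ` sigma_sets UNIV (Collect closed) = sigma_sets K ((\<inter>) K ` Collect closed)"
      by (rule sigma_sets_Int) auto
    then show ?thesis using sM by (simp add: sets_restrict_space borel_eq_closed)
  qed
  have opM: "U \<in> sets M" if "openin (top_of_set K) U" for U using openin_sets[OF sM that] .
  have "Int_stable ((\<inter>) K ` Collect closed)"
    unfolding Int_stable_def
  proof (safe)
    fix a b :: "'a set" assume "closed a" "closed b"
    then show "K \<inter> a \<inter> (K \<inter> b) \<in> (\<inter>) K ` Collect closed"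
      by (intro image_eqI[of _ _ "a \<inter> b"]) auto
  qed
  moreover have "(\<inter>) K ` Collect closed \<subseteq> Pow K" by auto
  moreover have "B \<in> sigma_sets K ((\<inter>) K ` Collect closed)" using B gen by simp
  ultimately have "P B \<and> P (K - B)"
  proof (induction B rule: sigma_sets_induct_disjoint)
    case (basic A)
    then obtain C where C: "closed C" "A = K \<inter> C" by auto
    have "P A" unfolding P_def C(2) using closedK_outer[OF fm sM cK C(1)] by blast
    moreover have "P (K - A)" unfolding P_def
    proof (intro allI impI)
      fix e :: real assume "e > 0"
      have "openin (top_of_set K) (K - A)" using C unfolding openin_open by (intro exI[of _ "- C"]) auto
      then show "\<exists>U. openin (top_of_set K) U \<and> K - A \<subseteq> U \<and> measure M (U - (K - A)) < e"
        using \<open>e > 0\<close> by (intro exI[of _ "K - A"]) auto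
    qed
    ultimately show ?case ..
  next
    case empty
    have "P {}" unfolding P_def by (auto intro!: exI[of _ "{}"])
    moreover have "P K" unfolding P_def by (auto intro!: exI[of _ K])
    ultimately show ?case by simp
  next
    case (compl A)
    have "A \<subseteq> K" using compl(1) sigma_sets_into_sp[of "(\<inter>) K ` Collect closed" K] by auto
    then have "K - (K - A) = A" by auto
    then show ?case using compl(2) by auto
  next
    case (union D)
    have DM: "D i \<in> sets M" for i using union(2) gen by auto
    have KDM: "K - D i \<in> sets M" for i using sets.Diff[OF sets.top DM] spK by auto
    have bd: "(\<lambda>i. e/4 * (1/2)^i) sums (e/2)" for e :: real
    proof -
      have "(\<lambda>i. (1/2::real)^i) sums (1 / (1 - 1/2))" by (rule geometric_sums) simp
      from sums_mult[OF this, of "e/4"] show ?thesis by simp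
    qed
    have "P (\<Union>i. D i)" unfolding P_def
    proof (intro allI impI)
      fix e :: real assume e: "e > 0"
      have "\<forall>i. \<exists>U. openin (top_of_set K) U \<and> D i \<subseteq> U \<and> measure M (U - D i) < e/4 * (1/2)^i"
      proof
        fix i :: nat
        have "e/4 * (1/2)^i > 0" using e by simp
        then show "\<exists>U. openin (top_of_set K) U \<and> D i \<subseteq> U \<and> measure M (U - D i) < e/4 * (1/2)^i" using union(3)[of i] unfolding P_def by blast
      qed
      then obtain U where U: "\<And>i. openin (top_of_set K) (U i)" "\<And>i. D i \<subseteq> U i"
        "\<And>i. measure M (U i - D i) < e/4 * (1/2)^i" by metis
      have GM: "range (\<lambda>i. U i - D i) \<subseteq> sets M" using opM[OF U(1)] DM by auto
      have sg: "summable (\<lambda>i. measure M (U i - D i))"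
        by (rule summable_comparison_test'[OF sums_summable[OF bd[of e]], of 0])
          (use U(3) in \<open>auto intro: less_imp_le\<close>)
      have "measure M ((\<Union>i. U i) - (\<Union>i. D i)) \<le> measure M (\<Union>i. U i - D i)"
        by (rule finite_measure_mono) (use GM in auto)
      also have "\<dots> \<le> (\<Sum>i. measure M (U i - D i))"
        by (rule finite_measure_subadditive_countably[OF GM sg])
      also have "\<dots> \<le> (\<Sum>i. e/4 * (1/2)^i)"
        by (rule suminf_le[OF _ sg sums_summable[OF bd[of e]]]) (use U(3) in \<open>auto intro: less_imp_le\<close>)
      also have "\<dots> = e/2" using bd[of e] by (simp add: sums_iff)
      finally have "measure M ((\<Union>i. U i) - (\<Union>i. D i)) < e" using e by linarith
      moreover have "openin (top_of_set K) (\<Union>i. U i)" using U(1) by auto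
      moreover have "(\<Union>i. D i) \<subseteq> (\<Union>i. U i)" using U(2) by auto
      ultimately show "\<exists>U. openin (top_of_set K) U \<and> (\<Union>i. D i) \<subseteq> U \<and> measure M (U - (\<Union>i. D i)) < e"
        by blast
    qed
    moreover have "P (K - (\<Union>i. D i))" unfolding P_def
    proof (intro allI impI)
      fix e :: real assume e: "e > 0"
      have "\<forall>i. \<exists>U. openin (top_of_set K) U \<and> K - D i \<subseteq> U \<and> measure M (U - (K - D i)) < e/4 * (1/2)^i"
      proof
        fix i :: nat
        have "e/4 * (1/2)^i > 0" using e by simp
        then show "\<exists>U. openin (top_of_set K) U \<and> K - D i \<subseteq> U \<and> measure M (U - (K - D i)) < e/4 * (1/2)^i" using union(3)[of i] unfolding P_def by blast
      qed
      then obtain V where V: "\<And>i. openin (top_of_set K) (V i)" "\<And>i. K - D i \<subseteq> V i"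
        "\<And>i. measure M (V i - (K - D i)) < e/4 * (1/2)^i" by metis
      define A where "A n = K - (\<Union>i\<in>{..n}. D i)" for n
      have AM: "range A \<subseteq> sets M" unfolding A_def using DM spK by auto
      have Adec: "decseq A" unfolding A_def decseq_def by auto
      have Aint: "(\<Inter>n. A n) = K - (\<Union>i. D i)" unfolding A_def by auto
      have "(\<lambda>n. measure M (A n)) \<longlonglongrightarrow> measure M (\<Inter>n. A n)"
        by (rule finite_Lim_measure_decseq[OF AM Adec])
      then have "(\<lambda>n. measure M (A n)) \<longlonglongrightarrow> measure M (K - (\<Union>i. D i))" using Aint by simp
      from order_tendstoD(2)[OF this, of "measure M (K - (\<Union>i. D i)) + e/2"] e
      obtain N where N: "measure M (A N) < measure M (K - (\<Union>i. D i)) + e/2"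
        by (auto simp: eventually_sequentially)
      define U where "U = (\<Inter>i\<in>{..N}. V i)"
      have Uo: "openin (top_of_set K) U" unfolding U_def using V(1) by (intro openin_INT2) auto
      have VK: "V i \<subseteq> K" for i using openin_subset[OF V(1)] by simp
      have sub: "U - (K - (\<Union>i. D i)) \<subseteq> (\<Union>i\<in>{..N}. V i - (K - D i)) \<union> (A N - (K - (\<Union>i. D i)))"
        unfolding U_def A_def using VK by blast
      have UDM: "K - (\<Union>i. D i) \<in> sets M" using DM spK by auto
      have VM: "V i - (K - D i) \<in> sets M" for i using opM[OF V(1)] KDM by auto
      have "measure M (U - (K - (\<Union>i. D i))) \<le> measure M ((\<Union>i\<in>{..N}. V i - (K - D i)) \<union> (A N - (K - (\<Union>i. D i))))"
        by (rule finite_measure_mono[OF sub]) (use VM AM UDM in auto)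
      also have "\<dots> \<le> measure M (\<Union>i\<in>{..N}. V i - (K - D i)) + measure M (A N - (K - (\<Union>i. D i)))"
        by (rule measure_Un_le) (use VM AM UDM in auto)
      also have "measure M (\<Union>i\<in>{..N}. V i - (K - D i)) \<le> (\<Sum>i\<in>{..N}. measure M (V i - (K - D i)))"
        by (rule finite_measure_subadditive_finite) (use VM in auto)
      also have "\<dots> \<le> (\<Sum>i\<in>{..N}. e/4 * (1/2)^i)"
        by (rule sum_mono) (use V(3) in \<open>auto intro: less_imp_le\<close>)
      also have "\<dots> \<le> (\<Sum>i. e/4 * (1/2)^i)"
        by (rule sum_le_suminf[OF sums_summable[OF bd[of e]]]) (use e in auto)
      also have "\<dots> = e/2" using bd[of e] by (simp add: sums_iff)
      also have "measure M (A N - (K - (\<Union>i. D i))) = measure M (A N) - measure M (K - (\<Union>i. D i))"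
        by (rule measure_Diff) (use AM UDM in \<open>auto simp: A_def\<close>)
      finally have "measure M (U - (K - (\<Union>i. D i))) < e" using N by linarith
      moreover have "K - (\<Union>i. D i) \<subseteq> U" unfolding U_def using V(2) by blast
      ultimately show "\<exists>U. openin (top_of_set K) U \<and> K - (\<Union>i. D i) \<subseteq> U \<and> measure M (U - (K - (\<Union>i. D i))) < e"
        using Uo by blast
    qed
    ultimately show ?case ..
  qed
  then show ?thesis unfolding P_def by blast
qed

lemma supp_compact:
  fixes K :: "'a::metric_space set"
  assumes "compact K"
  shows "compact (supp_on K M)"
proof -
  have op: "openin (top_of_set K) (K - supp_on K M)"
  proof (subst openin_subopen, intro ballI)
    fix x assume x: "x \<in> K - supp_on K M"
    then obtain U where U: "openin (top_of_set K) U" "x \<in> U" "\<not> emeasure M U > 0"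
      unfolding supp_on_def by auto
    have "U \<subseteq> K - supp_on K M" using U openin_subset[OF U(1)] unfolding supp_on_def by auto
    then show "\<exists>T. openin (top_of_set K) T \<and> x \<in> T \<and> T \<subseteq> K - supp_on K M" using U by blast
  qed
  have sub: "supp_on K M \<subseteq> K" unfolding supp_on_def by blast
  have "closedin (top_of_set K) (supp_on K M)"
    unfolding closedin_def topspace_euclidean_subtopology using op sub by (intro conjI)
  then show ?thesis using closedin_compact[OF assms] by blast
qed
lemma null_nbhd:
  fixes K :: "'a::metric_space set"
  assumes sM: "sets M = sets (restrict_space borel K)"
    and S: "compact S" "S \<subseteq> K" "S \<inter> supp_on K M = {}"
  shows "\<exists>W. open W \<and> S \<subseteq> W \<and> emeasure M (K \<inter> W) = 0"
proof -
  have ex: "\<forall>x\<in>S. \<exists>T. open T \<and> x \<in> T \<and> emeasure M (K \<inter> T) = 0"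
  proof
    fix x assume x: "x \<in> S"
    then have "x \<in> K" "x \<notin> supp_on K M" using S by blast+
    then obtain U where U: "openin (top_of_set K) U" "x \<in> U" "\<not> emeasure M U > 0"
      unfolding supp_on_def by blast
    then obtain T where T: "open T" "U = K \<inter> T" unfolding openin_open by blast
    show "\<exists>T. open T \<and> x \<in> T \<and> emeasure M (K \<inter> T) = 0"
    proof (intro exI[of _ T] conjI)
      show "open T" by (fact T(1))
      show "x \<in> T" using U(2) T(2) by blast
      have "emeasure M U = 0" using U(3) by (simp add: not_gr_zero)
      then show "emeasure M (K \<inter> T) = 0" using T(2) by simp
    qed
  qed
  obtain T where T0: "\<forall>x\<in>S. open (T x) \<and> x \<in> T x \<and> emeasure M (K \<inter> T x) = 0"
    using bchoice[OF ex] by blast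
  then have T: "\<And>x. x \<in> S \<Longrightarrow> open (T x)" "\<And>x. x \<in> S \<Longrightarrow> x \<in> T x"
    "\<And>x. x \<in> S \<Longrightarrow> emeasure M (K \<inter> T x) = 0" by auto
  have cov: "S \<subseteq> \<Union>(T ` S)" using T(2) by auto
  obtain C where C: "C \<subseteq> S" "finite C" "S \<subseteq> \<Union>(T ` C)"
    using compactE_image[OF S(1) T(1) cov] by blast
  have nul: "(\<Union>x\<in>C. K \<inter> T x) \<in> null_sets M"
  proof (rule null_sets_UN')
    show "countable C" using C(2) by (rule countable_finite)
    fix x assume "x \<in> C"
    then have "x \<in> S" using C by auto
    moreover have "K \<inter> T x \<in> sets M" unfolding sM sets_restrict_space using T(1)[OF \<open>x \<in> S\<close>] by (intro image_eqI[of _ _ "T x"]) auto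
    ultimately show "K \<inter> T x \<in> null_sets M" using T(3) by (simp add: null_sets_def)
  qed
  have eq: "K \<inter> \<Union>(T ` C) = (\<Union>x\<in>C. K \<inter> T x)" by blast
  have m0: "emeasure M (K \<inter> \<Union>(T ` C)) = 0" unfolding eq using nul by (rule null_setsD1)
  have op: "open (\<Union>(T ` C))" by (rule open_UN) (use C(1) T(1) in blast)
  show ?thesis by (intro exI[of _ "\<Union>(T ` C)"] conjI op m0 C(3))
qed


theorem lemma2p4:
  fixes K :: "'a::metric_space set"
    and \<mu>s :: "nat \<Rightarrow> 'a measure" and \<mu> :: "'a measure"
  assumes "compact K"
    and "\<And>j. borel_on K (\<mu>s j)" and "\<And>j. finite_measure (\<mu>s j)"
    and "\<And>j. regular_on K (\<mu>s j)"
    and "borel_on K \<mu>" and "finite_measure \<mu>"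
    and "weak_star_conv K \<mu>s \<mu>"
    and "\<And>j. supp_on K (\<mu>s j) \<inter> supp_on K \<mu> = {}"
  shows "regular_conv K \<mu>s \<mu>"
proof -
  note cK = \<open>compact K\<close>
  have sMj: "sets (\<mu>s j) = sets (restrict_space borel K)" for j using assms(2) unfolding borel_on_def by blast
  have sM: "sets \<mu> = sets (restrict_space borel K)" using assms(5) unfolding borel_on_def by blast
  have spK: "space \<mu> = K" using sets_eq_imp_space_eq[OF sM] by (simp add: space_restrict_space)
  have spKj: "space (\<mu>s j) = K" for j using sets_eq_imp_space_eq[OF sMj] by (simp add: space_restrict_space)
  interpret fm: finite_measure \<mu> by fact
  define S where "S = supp_on K \<mu>"
  have Sc: "compact S" unfolding S_def using supp_compact[OF cK] .
  have SK: "S \<subseteq> K" unfolding S_def supp_on_def by blast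
  have "\<exists>W. open W \<and> S \<subseteq> W \<and> emeasure (\<mu>s j) (K \<inter> W) = 0" for j
    using null_nbhd[OF sMj Sc SK] assms(8)[of j] unfolding S_def by blast
  then obtain W where W: "\<And>j. open (W j)" "\<And>j. S \<subseteq> W j" "\<And>j. emeasure (\<mu>s j) (K \<inter> W j) = 0"
    by metis
  have "\<forall>A\<in>sets (completion \<mu>). A \<subseteq> S \<longrightarrow>
       (\<forall>\<epsilon>>0. \<exists>U j0. openin (top_of_set K) U \<and> A \<subseteq> U \<and>
          (\<forall>j\<ge>j0. measure (\<mu>s j) U < measure (completion \<mu>) A + \<epsilon>))"
  proof (intro ballI impI allI)
    fix A and \<epsilon> :: real
    assume A: "A \<in> sets (completion \<mu>)" and AS: "A \<subseteq> S" and e: "\<epsilon> > 0"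
    show "\<exists>U j0. openin (top_of_set K) U \<and> A \<subseteq> U \<and>
          (\<forall>j\<ge>j0. measure (\<mu>s j) U < measure (completion \<mu>) A + \<epsilon>)"
    proof -
      obtain S0 N N' where SN: "A = S0 \<union> N" "N \<subseteq> N'" "N' \<in> null_sets \<mu>" "S0 \<in> sets \<mu>"
        using sets_completionE[OF A] by metis
      define B where "B = S0 \<union> N'"
      have BM: "B \<in> sets \<mu>" unfolding B_def using SN by auto
      have AB: "A \<subseteq> B" unfolding B_def using SN by auto
      have N0: "measure \<mu> N' = 0" using null_setsD1[OF SN(3)] by (simp add: measure_def)
      have "measure \<mu> B \<le> measure \<mu> S0 + measure \<mu> N'"
        unfolding B_def by (rule measure_Un_le) (use SN in auto)
      also have "\<dots> = measure (completion \<mu>) S0" using N0 SN(4) by simp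
      also have "\<dots> \<le> measure (completion \<mu>) A"
      proof -
        have "finite_measure (completion \<mu>)"
        proof (rule finite_measureI)
          have "emeasure (completion \<mu>) (space (completion \<mu>)) = emeasure \<mu> (space \<mu>)"
            by simp
          then show "emeasure (completion \<mu>) (space (completion \<mu>)) \<noteq> \<infinity>" by simp
        qed
        then show ?thesis by (rule finite_measure.finite_measure_mono) (use SN A in auto)
      qed
      finally have mB: "measure \<mu> B \<le> measure (completion \<mu>) A" .
      have "\<epsilon>/2 > 0" using e by simp
      then obtain V where V: "openin (top_of_set K) V" "B \<subseteq> V" "measure \<mu> (V - B) < \<epsilon>/2"
        using outer_reg[OF assms(6) sM compact_imp_closed[OF cK] BM] by blast
      have VM: "V \<in> sets \<mu>" using openin_sets[OF sM V(1)] .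
      have "measure \<mu> (V - B) = measure \<mu> V - measure \<mu> B"
        by (rule measure_Diff) (use VM BM V(2) in auto)
      then have mV: "measure \<mu> V < measure (completion \<mu>) A + \<epsilon>/2" using V(3) mB by linarith
      obtain Oo where Oo: "open Oo" "V = K \<inter> Oo" using V(1) openin_open by blast
      define Z where "Z = K - V"
      have Zc: "closed Z" unfolding Z_def
      proof -
        have "K - V = K \<inter> (- Oo)" using Oo by blast
        then show "closed (K - V)" using Oo compact_imp_closed[OF cK] by (simp add: closed_Int open_closed)
      qed
      define d where "d x = (if Z = {} then 1 else infdist x Z)" for x
      have dcont: "continuous_on UNIV d"
        by (cases "Z = {}") (auto simp: d_def intro!: continuous_intros)
      have d0: "d x \<ge> 0" for x by (simp add: d_def infdist_nonneg)
      have dZ: "d x = 0" if "x \<in> Z" for x using that by (auto simp: d_def infdist_zero)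
      have dV: "d x > 0" if "x \<in> V" for x
      proof (cases "Z = {}")
        case False
        have "x \<notin> Z" using that unfolding Z_def by blast
        then show ?thesis using infdist_pos_not_in_closed[OF Zc False] False by (simp add: d_def)
      qed (simp add: d_def)
      define f where "f n x = min 1 (real (Suc n) * d x)" for n x
      define Vn where "Vn n = K \<inter> {x. 1 < real (Suc n) * d x}" for n
      have cmul: "continuous_on UNIV (\<lambda>x. real (Suc n) * d x)" for n
        by (rule continuous_on_mult[OF continuous_on_const dcont])
      have Vno: "open {x. 1 < real (Suc n) * d x}" for n
        by (rule open_Collect_less[OF continuous_on_const cmul])
      have VnM: "Vn n \<in> sets (restrict_space borel K)" for n
        unfolding Vn_def sets_restrict_space using Vno[of n] by auto
      have VnK: "Vn n \<subseteq> K" for n unfolding Vn_def by blast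
      have Vnmono: "Vn n \<subseteq> Vn m" if "n \<le> m" for n m
      proof
        fix x assume "x \<in> Vn n"
        then have x: "x \<in> K" "1 < real (Suc n) * d x" unfolding Vn_def by auto
        have "real (Suc n) * d x \<le> real (Suc m) * d x" using that d0[of x] by (intro mult_right_mono) auto
        then show "x \<in> Vn m" using x unfolding Vn_def by auto
      qed
      have fcont: "continuous_on K (f n)" for n
      proof -
        have "continuous_on UNIV (f n)" unfolding f_def
          by (intro continuous_on_min continuous_on_const cmul)
        then show ?thesis by (rule continuous_on_subset) simp
      qed
      have fb: "norm (f n x) \<le> 1" for n x using d0[of x] by (simp add: f_def)
      have fint: "integrable M (f n)" if "finite_measure M" "sets M = sets (restrict_space borel K)" for M n
      proof (rule finite_measure.integrable_const_bound[OF that(1), where B=1])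
        show "AE x in M. norm (f n x) \<le> 1" using fb by simp
        show "f n \<in> borel_measurable M"
          by (subst measurable_cong_sets[OF that(2) refl])
            (rule borel_measurable_continuous_on_restrict[OF fcont[of n]])
      qed
      have lowb: "measure (\<mu>s j) (Vn n) \<le> (\<integral>x. f n x \<partial>\<mu>s j)" for j n
      proof -
        have "measure (\<mu>s j) (Vn n) = (\<integral>x. indicator (Vn n) x \<partial>\<mu>s j)"
          using VnK[of n] spKj[of j] by (simp add: Int_absorb2)
        also have "\<dots> \<le> (\<integral>x. f n x \<partial>\<mu>s j)"
        proof (rule integral_mono)
          show "integrable (\<mu>s j) (indicator (Vn n) :: 'a \<Rightarrow> real)"
            using VnM[of n] sMj[of j] finite_measure.emeasure_finite[OF assms(3)[of j], of "Vn n"]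
            by (intro integrable_real_indicator) (auto simp: less_top)
          show "integrable (\<mu>s j) (f n)" by (rule fint[OF assms(3) sMj])
          fix x show "indicator (Vn n) x \<le> f n x"
            using d0[of x] by (auto simp: indicator_def Vn_def f_def)
        qed
        finally show ?thesis .
      qed
      have upb: "(\<integral>x. f n x \<partial>\<mu>) \<le> measure \<mu> V" for n
      proof -
        have "(\<integral>x. f n x \<partial>\<mu>) \<le> (\<integral>x. indicator V x \<partial>\<mu>)"
        proof (rule integral_mono)
          show "integrable \<mu> (indicator V :: 'a \<Rightarrow> real)"
            using VM by (intro integrable_real_indicator) (simp_all add: fm.emeasure_eq_measure)
          show "integrable \<mu> (f n)" by (rule fint[OF assms(6) sM])
          fix x assume "x \<in> space \<mu>"
          then have "x \<in> K" using spK by simp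
          show "f n x \<le> indicator V x"
          proof (cases "x \<in> V")
            case False
            then have "x \<in> Z" using \<open>x \<in> K\<close> unfolding Z_def by blast
            then show ?thesis using dZ[of x] False by (simp add: f_def)
          qed (simp add: f_def)
        qed
        also have "\<dots> = measure \<mu> V" using openin_subset[OF V(1)] spK by (simp add: Int_absorb2)
        finally show ?thesis .
      qed
      have "\<exists>J. \<forall>j\<ge>J. (\<integral>x. f n x \<partial>\<mu>s j) < measure (completion \<mu>) A + \<epsilon>" for n
      proof -
        have conv: "(\<lambda>j. \<integral>x. f n x \<partial>\<mu>s j) \<longlonglongrightarrow> (\<integral>x. f n x \<partial>\<mu>)"
          using assms(7) fcont[of n] unfolding weak_star_conv_def by blast
        have "(\<integral>x. f n x \<partial>\<mu>) < measure (completion \<mu>) A + \<epsilon>" using upb[of n] mV e by linarith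
        from order_tendstoD(2)[OF conv this] show ?thesis by (auto simp: eventually_sequentially)
      qed
      then obtain J where J: "\<And>n j. j \<ge> J n \<Longrightarrow> (\<integral>x. f n x \<partial>\<mu>s j) < measure (completion \<mu>) A + \<epsilon>"
        by metis
      define J' where "J' n = n + (\<Sum>m\<le>n. J m)" for n
      have J'ge: "J m \<le> J' n" if "m \<le> n" for m n
      proof -
        have "J m \<le> (\<Sum>m\<le>n. J m)" by (rule member_le_sum) (use that in auto)
        then show ?thesis unfolding J'_def by simp
      qed
      have J'n: "n \<le> J' n" for n unfolding J'_def by simp
      define W' where "W' n = (\<Inter>j\<in>{..<J' n}. W j)" for n
      have W'o: "open (W' n)" for n unfolding W'_def by (rule open_INT) (use W(1) in auto)
      define U where "U = (\<Union>n. Vn n \<inter> W' n)"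
      have Uo: "openin (top_of_set K) U"
        unfolding openin_open
      proof (intro exI conjI)
        show "open (\<Union>n. {x. 1 < real (Suc n) * d x} \<inter> W' n)"
          using Vno W'o by (intro open_UN ballI open_Int) auto
        show "U = K \<inter> (\<Union>n. {x. 1 < real (Suc n) * d x} \<inter> W' n)"
          unfolding U_def Vn_def by blast
      qed
      have AU: "A \<subseteq> U"
      proof
        fix a assume "a \<in> A"
        then have aS: "a \<in> S" and aV: "a \<in> V" using AS AB V(2) by auto
        then have aK: "a \<in> K" using SK by auto
        obtain n where n: "1 < real n * d a" using ex_less_of_nat_mult[OF dV[OF aV]] by blast
        have "real n * d a \<le> real (Suc n) * d a" using d0[of a] by (intro mult_right_mono) auto
        then have "a \<in> Vn n" using n aK unfolding Vn_def by auto
        moreover have "a \<in> W' n" using aS W(2) unfolding W'_def by blast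
        ultimately show "a \<in> U" unfolding U_def by blast
      qed
      have bound: "measure (\<mu>s j) U < measure (completion \<mu>) A + \<epsilon>" if j: "j \<ge> J' 0" for j
      proof -
        define Ns where "Ns = {n. J' n \<le> j}"
        have Nsf: "finite Ns" by (rule finite_subset[of _ "{..j}"]) (use J'n in \<open>auto simp: Ns_def intro: order_trans\<close>)
        have Ns0: "0 \<in> Ns" using j unfolding Ns_def by simp
        define m where "m = Max Ns"
        have mN: "m \<in> Ns" unfolding m_def using Nsf Ns0 by (intro Max_in) auto
        have leM: "n \<le> m" if "n \<in> Ns" for n unfolding m_def using Nsf that by simp
        have sub: "U \<subseteq> Vn m \<union> (K \<inter> W j)"
        proof
          fix x assume "x \<in> U"
          then obtain n where x: "x \<in> Vn n" "x \<in> W' n" unfolding U_def by blast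
          show "x \<in> Vn m \<union> (K \<inter> W j)"
          proof (cases "n \<in> Ns")
            case True
            then show ?thesis using Vnmono[OF leM[OF True]] x by blast
          next
            case False
            then have "j < J' n" unfolding Ns_def by simp
            then have "x \<in> W j" using x(2) unfolding W'_def by blast
            then show ?thesis using x(1) VnK by blast
          qed
        qed
        have KWM: "K \<inter> W j \<in> sets (\<mu>s j)" using W(1)[of j] sMj[of j] by (auto simp: sets_restrict_space)
        have VnMj: "Vn m \<in> sets (\<mu>s j)" using VnM sMj by auto
        have "measure (\<mu>s j) U \<le> measure (\<mu>s j) (Vn m \<union> (K \<inter> W j))"
          by (rule finite_measure.finite_measure_mono[OF assms(3) sub]) (use KWM VnMj in auto)
        also have "\<dots> \<le> measure (\<mu>s j) (Vn m) + measure (\<mu>s j) (K \<inter> W j)"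
          by (rule measure_Un_le[OF VnMj KWM])
        also have "measure (\<mu>s j) (K \<inter> W j) = 0" using W(3)[of j] by (simp add: measure_def)
        also have "measure (\<mu>s j) (Vn m) \<le> (\<integral>x. f m x \<partial>\<mu>s j)" by (rule lowb)
        also have "\<dots> < measure (completion \<mu>) A + \<epsilon>"
          using J[of m j] J'ge[of m m] mN unfolding Ns_def by auto
        finally show ?thesis by simp
      qed
      show ?thesis using Uo AU bound by blast
    qed
  qed
  then show ?thesis using assms(7) unfolding regular_conv_def S_def by blast
qed


end
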